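(* Let $X\subset\mathcal M=\mathbb R^4$ be a timelike straight line. Let $\mathtt{Aut}^{\rm c}_X$ be the subgroup of $\mathtt{Aut}^{\rm c}$ consisting of those $f$ with $f(X)=X$. Let $S$ be a non-trivial $\mathtt{Aut}^{\rm c}_X$-invariant equivalence relation on $\mathcal M$. Suppose there exist $p\in X$ and $q\notin X$ with $S(p,q)$. Then $S$ is standard Einstein simultaneity relative to $X$: for all $r,s\in\mathcal M$, $S(r,s)$ holds iff $\eta(s-r,u)=0$, where $u$ is a direction vector of $X$. Equivalently, the equivalence classes are exactly the hyperplanes Minkowski-orthogonal to $X$.
   Context: Spacetime is $\mathcal M=\mathbb R^4$, with points $(t,\vec x)$, equipped with the Minkowski bilinear form $\eta(x,y)=x^0y^0-x^1y^1-x^2y^2-x^3y^3$. A straight line is timelike if its direction vector $u$ satisfies $\eta(u,u)>0$. $\mathtt{Aut}^{\rm c}$ (the causal automorphism group) is the group of all bijections $f$ of $\mathbb R^4$ such that, for all $p,q$, $\eta(p-q,p-q)\ge0$ iff $\eta(f(p)-f(q),f(p)-f(q))\ge0$. Equivalently (a result of Alexandrov), $\mathtt{Aut}^{\rm c}$ is the group generated by: - the maps $p\mapsto Lp+a$ with $a\in\mathbb R^4$ and $L$ a real $4\times4$ matrix with $L\eta L^{\top}=\eta$, $\det L=1$, $L^0{}_0\ge1$; - the time reflection $(t,\vec x)\mapsto(-t,\vec x)$; - the space reflection $(t,\vec x)\mapsto(t,-\vec x)$; - the dilatations $p\mapsto\lambda p$ with $\lambda>0$. An equivalence relation $S$ is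 $G$-invariant if $S(p,q)\Leftrightarrow S(g\cdot p,g\cdot q)$ for all $g\in G$ and all $p,q$. It is non-trivial if it is neither the one-class relation nor the equality relation. *)

theory Defs
  imports "HOL-Analysis.Analysis"
begin

text \<open>Points of Minkowski spacetime: real^4, coordinate 0 is time, 1,2,3 are space.\<close>
type_synonym point = "real ^ 4"

definition eta :: "point \<Rightarrow> point \<Rightarrow> real" where
  "eta x y = x$0 * y$0 - x$1 * y$1 - x$2 * y$2 - x$3 * y$3"

definition causal_aut :: "(point \<Rightarrow> point) \<Rightarrow> bool" where
  "causal_aut f \<longleftrightarrow> bij f \<and>
     (\<forall>p q. eta (p - q) (p - q) \<ge> 0 \<longleftrightarrow> eta (f p - f q) (f p - f q) \<ge> 0)"

definition line :: "point \<Rightarrow> point \<Rightarrow> point set" where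
  "line a u = {a + t *\<^sub>R u | t. True}"

definition invariant_under :: "((point \<Rightarrow> point) \<Rightarrow> bool) \<Rightarrow> (point \<Rightarrow> point \<Rightarrow> bool) \<Rightarrow> bool" where
  "invariant_under G S \<longleftrightarrow> (\<forall>g. G g \<longrightarrow> (\<forall>p q. S p q \<longleftrightarrow> S (g p) (g q)))"

definition nontrivial_rel :: "(point \<Rightarrow> point \<Rightarrow> bool) \<Rightarrow> bool" where
  "nontrivial_rel S \<longleftrightarrow> \<not> (\<forall>p q. S p q) \<and> \<not> (\<forall>p q. S p q \<longleftrightarrow> p = q)"

end

theory Submission
  imports Defs
begin

lemma eta_add1[simp]: "eta (x + y) z = eta x z + eta y z" by (simp add: eta_def algebra_simps)
lemma eta_add2[simp]: "eta z (x + y) = eta z x + eta z y" by (simp add: eta_def algebra_simps)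
lemma eta_diff1[simp]: "eta (x - y) z = eta x z - eta y z" by (simp add: eta_def algebra_simps)
lemma eta_diff2[simp]: "eta z (x - y) = eta z x - eta z y" by (simp add: eta_def algebra_simps)
lemma eta_scale1[simp]: "eta (t *\<^sub>R x) z = t * eta x z" by (simp add: eta_def algebra_simps)
lemma eta_scale2[simp]: "eta z (t *\<^sub>R x) = t * eta z x" by (simp add: eta_def algebra_simps)
lemma eta_neg1[simp]: "eta (- x) z = - eta x z" by (simp add: eta_def algebra_simps)
lemma eta_neg2[simp]: "eta z (- x) = - eta z x" by (simp add: eta_def algebra_simps)
lemma eta_sym: "eta x y = eta y x" by (simp add: eta_def algebra_simps)
lemma eta_zero1[simp]: "eta 0 x = 0" by (simp add: eta_def)
lemma eta_zero2[simp]: "eta x 0 = 0" by (simp add: eta_def)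

lemma point_eq0: fixes w :: point
  assumes "w$0 = 0" "w$1 = 0" "w$2 = 0" "w$3 = 0" shows "w = 0"
proof -
  have f: "(4::4) = 0" by simp
  have "\<forall>i::4. w$i = 0" unfolding forall_4 f using assms by simp
  then show ?thesis by (simp add: vec_eq_iff)
qed

lemma eta_orth_neg:
  fixes w u :: point
  assumes u: "eta u u > 0" and o: "eta w u = 0" and nz: "w \<noteq> 0"
  shows "eta w w < 0"
proof -
  define s where "s = w$1*u$1 + w$2*u$2 + w$3*u$3"
  define W where "W = (w$1)^2 + (w$2)^2 + (w$3)^2"
  define U where "U = (u$1)^2 + (u$2)^2 + (u$3)^2"
  have h0: "w$0 * u$0 = s" using o by (simp add: eta_def s_def)
  have hu: "(u$0)^2 > U" using u by (simp add: eta_def U_def power2_eq_square)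
  have cs: "s^2 \<le> W * U"
  proof -
    have "W*U - s^2 = (w$1*u$2 - w$2*u$1)^2 + (w$1*u$3 - w$3*u$1)^2 + (w$2*u$3 - w$3*u$2)^2"
      by (simp add: W_def U_def s_def power2_eq_square algebra_simps)
    then show ?thesis by (smt (verit) zero_le_power2)
  qed
  have ww: "eta w w = (w$0)^2 - W" by (simp add: eta_def W_def power2_eq_square)
  show ?thesis
  proof (cases "W = 0")
    case True
    then have "w$1 = 0" "w$2 = 0" "w$3 = 0" unfolding W_def
      by (smt (verit) zero_le_power2 power_eq_0_iff)+
    then have "s = 0" by (simp add: s_def)
    moreover have "u$0 \<noteq> 0"
    proof
      assume "u$0 = 0"
      moreover have "U \<ge> 0" by (simp add: U_def)
      ultimately show False using hu by simp
    qed
    ultimately have "w$0 = 0" using h0 by simp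
    then have "w = 0" using point_eq0 \<open>w$1 = 0\<close> \<open>w$2 = 0\<close> \<open>w$3 = 0\<close> by blast
    then show ?thesis using nz by simp
  next
    case False
    then have Wp: "W > 0" unfolding W_def by (smt (verit) zero_le_power2)
    have "(w$0)^2 * (u$0)^2 = s^2" using h0 by (metis power_mult_distrib)
    also have "\<dots> \<le> W*U" by (rule cs)
    also have "\<dots> < W * (u$0)^2" using Wp hu by simp
    finally have "(w$0)^2 < W" using hu
      by (smt (verit) mult_right_mono zero_le_power2)
    then show ?thesis using ww by simp
  qed
qed


definition refl :: "point \<Rightarrow> point \<Rightarrow> point" where
  "refl n v = v - (2 * eta v n / eta n n) *\<^sub>R n"

lemma refl_diff: "refl n (v - w) = refl n v - refl n w"
  by (simp add: refl_def algebra_simps diff_divide_distrib)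

lemma refl_scale: "refl n (t *\<^sub>R v) = t *\<^sub>R refl n v"
  by (simp add: refl_def algebra_simps)

lemma refl_eta: assumes "eta n n \<noteq> 0" shows "eta (refl n v) (refl n v) = eta v v"
  using assms by (simp add: refl_def eta_sym[of n v] field_simps power2_eq_square)

lemma refl_refl: assumes "eta n n \<noteq> 0" shows "refl n (refl n v) = v"
proof -
  have "eta (refl n v) n = - eta v n" using assms by (simp add: refl_def)
  then show ?thesis using assms by (simp add: refl_def algebra_simps)
qed

lemma refl_self: assumes "eta n n \<noteq> 0" shows "refl n n = - n"
proof -
  have "refl n n = n - 2 *\<^sub>R n" using assms by (simp add: refl_def)
  also have "\<dots> = - n" by (simp add: scaleR_2)
  finally show ?thesis .
qed

lemma refl_orth: assumes "eta u n = 0" shows "refl n u = u"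
  using assms by (simp add: refl_def)

lemma causal_intro:
  assumes "bij f" "k > 0" "\<And>p q. eta (f p - f q) (f p - f q) = k * eta (p - q) (p - q)"
  shows "causal_aut f"
  using assms unfolding causal_aut_def by (simp add: zero_le_mult_iff)

lemma img_eq:
  assumes "\<And>x. x \<in> A \<Longrightarrow> f x \<in> A" "\<And>y. y \<in> A \<Longrightarrow> g y \<in> A" "\<And>y. f (g y) = y"
  shows "f ` A = A"
proof
  show "f ` A \<subseteq> A" using assms(1) by blast
  show "A \<subseteq> f ` A"
  proof
    fix y assume "y \<in> A"
    then have "g y \<in> A" using assms(2) by blast
    moreover have "y = f (g y)" using assms(3) by simp
    ultimately show "y \<in> f ` A" by blast
  qed
qed

lemma line_mem: "x \<in> line a u \<longleftrightarrow> (\<exists>t. x = a + t *\<^sub>R u)"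
  by (auto simp: line_def)

locale ctx =
  fixes a u :: point and X :: "point set" and S :: "point \<Rightarrow> point \<Rightarrow> bool"
  assumes tl: "eta u u > 0" and Xd: "X = line a u" and eq: "equivp S"
    and inv: "invariant_under (\<lambda>f. causal_aut f \<and> f ` X = X) S"
begin

lemma Sg: "causal_aut g \<Longrightarrow> g ` X = X \<Longrightarrow> S p q \<Longrightarrow> S (g p) (g q)"
  using inv unfolding invariant_under_def by blast

lemma Ssym: "S p q \<Longrightarrow> S q p" using eq by (meson equivp_symp)
lemma Strans: "S p q \<Longrightarrow> S q r \<Longrightarrow> S p r" using eq by (meson equivp_transp)
lemma Srefl: "S p p" using eq by (meson equivp_reflp)

lemma memX: "x \<in> X \<longleftrightarrow> (\<exists>t. x = a + t *\<^sub>R u)" by (simp add: Xd line_mem)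

lemma L_trans:
  assumes "S p q" shows "S (p + t *\<^sub>R u) (q + t *\<^sub>R u)"
proof -
  let ?g = "\<lambda>x. x + t *\<^sub>R u"
  let ?h = "\<lambda>x. x - t *\<^sub>R u"
  have b: "bij ?g" by (rule o_bij[where g = ?h]) (auto simp: fun_eq_iff)
  have "causal_aut ?g" by (rule causal_intro[OF b, where k=1]) auto
  moreover have "?g ` X = X"
  proof (rule img_eq[where g = ?h])
    fix x assume "x \<in> X" then obtain s where "x = a + s *\<^sub>R u" using memX by blast
    then show "?g x \<in> X" unfolding memX by (intro exI[of _ "s + t"]) (simp add: vec_eq_iff algebra_simps diff_divide_distrib)
  next
    fix x assume "x \<in> X" then obtain s where "x = a + s *\<^sub>R u" using memX by blast
    then show "?h x \<in> X" unfolding memX by (intro exI[of _ "s - t"]) (simp add: vec_eq_iff algebra_simps diff_divide_distrib)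
  qed simp
  ultimately show ?thesis using Sg assms by blast
qed

lemma L_dil:
  assumes c: "c \<in> X" and l: "l \<noteq> 0" and "S p q"
  shows "S (c + l *\<^sub>R (p - c)) (c + l *\<^sub>R (q - c))"
proof -
  let ?g = "\<lambda>x. c + l *\<^sub>R (x - c)"
  let ?h = "\<lambda>x. c + (1/l) *\<^sub>R (x - c)"
  obtain t0 where t0: "c = a + t0 *\<^sub>R u" using c memX by blast
  have b: "bij ?g" by (rule o_bij[where g = ?h]) (use l in \<open>auto simp: fun_eq_iff\<close>)
  have "causal_aut ?g"
  proof (rule causal_intro[OF b, where k="l^2"])
    show "l^2 > 0" using l by simp
    fix p q
    have "?g p - ?g q = l *\<^sub>R (p - q)" by (simp add: vec_eq_iff algebra_simps diff_divide_distrib)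
    then show "eta (?g p - ?g q) (?g p - ?g q) = l^2 * eta (p - q) (p - q)"
      by (simp only: eta_scale1 eta_scale2 power2_eq_square)
  qed
  moreover have "?g ` X = X"
  proof (rule img_eq[where g = ?h])
    fix x assume "x \<in> X" then obtain s where "x = a + s *\<^sub>R u" using memX by blast
    then show "?g x \<in> X" unfolding memX t0
      by (intro exI[of _ "t0 + l * (s - t0)"]) (simp add: vec_eq_iff algebra_simps diff_divide_distrib)
  next
    fix x assume "x \<in> X" then obtain s where "x = a + s *\<^sub>R u" using memX by blast
    then show "?h x \<in> X" unfolding memX t0
      by (intro exI[of _ "t0 + (1/l) * (s - t0)"]) (simp add: vec_eq_iff algebra_simps diff_divide_distrib)
  next
    fix y show "?g (?h y) = y" using l by simp
  qed
  ultimately show ?thesis using Sg assms by blast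
qed

lemma L_refl:
  assumes c: "c \<in> X" and n: "eta n n \<noteq> 0" and nu: "eta u n = 0 \<or> n = u" and "S p q"
  shows "S (c + refl n (p - c)) (c + refl n (q - c))"
proof -
  let ?g = "\<lambda>x. c + refl n (x - c)"
  obtain t0 where t0: "c = a + t0 *\<^sub>R u" using c memX by blast
  have gg: "?g (?g x) = x" for x using refl_refl[OF n] by simp
  have b: "bij ?g" by (rule o_bij[where g = ?g]) (use gg in \<open>auto simp: fun_eq_iff\<close>)
  have "causal_aut ?g"
  proof (rule causal_intro[OF b, where k=1])
    fix p q
    have "?g p - ?g q = refl n (p - q)" by (simp add: refl_diff[symmetric])
    then show "eta (?g p - ?g q) (?g p - ?g q) = 1 * eta (p - q) (p - q)"
      by (simp add: refl_eta[OF n])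
  qed simp
  moreover have gX: "?g x \<in> X" if "x \<in> X" for x
  proof -
    obtain s where s: "x = a + s *\<^sub>R u" using memX \<open>x \<in> X\<close> by blast
    have "x - c = (s - t0) *\<^sub>R u" using s t0 by (simp add: vec_eq_iff algebra_simps diff_divide_distrib)
    then have gx: "?g x = c + (s - t0) *\<^sub>R refl n u" by (simp add: refl_scale)
    show "?g x \<in> X"
    proof (cases "eta u n = 0")
      case True
      then have "?g x = c + (s - t0) *\<^sub>R u" using gx refl_orth[of u n] by simp
      moreover have "c + (s - t0) *\<^sub>R u = a + s *\<^sub>R u" using t0
        by (simp add: vec_eq_iff algebra_simps diff_divide_distrib)
      ultimately show ?thesis unfolding memX by metis
    next
      case False
      then have "n = u" using nu by blast
      then have "?g x = c + (s - t0) *\<^sub>R (- u)" using gx refl_self[OF n] by simp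
      moreover have "c + (s - t0) *\<^sub>R (- u) = a + (2 * t0 - s) *\<^sub>R u" using t0
        by (simp add: vec_eq_iff algebra_simps diff_divide_distrib)
      ultimately show ?thesis unfolding memX by metis
    qed
  qed
  then have "?g ` X = X" by (intro img_eq[where g = ?g]) (use gg in auto)
  ultimately show ?thesis using Sg assms by blast
qed


lemma Orth:
  assumes c: "c \<in> X" and w0: "eta w0 u = 0" "w0 \<noteq> 0" and S0: "S c (c + w0)"
    and w': "eta w' u = 0"
  shows "S c (c + w')"
proof (cases "w' = 0")
  case True then show ?thesis using Srefl by simp
next
  case False
  have E0: "eta w0 w0 < 0" using eta_orth_neg[OF tl w0] .
  have E': "eta w' w' < 0" using eta_orth_neg[OF tl w' False] .
  define l where "l = sqrt (eta w' w' / eta w0 w0)"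
  have q: "eta w' w' / eta w0 w0 > 0" using E0 E' by (simp add: divide_neg_neg)
  have lpos: "l > 0" using q by (simp add: l_def)
  have l2: "l * l = eta w' w' / eta w0 w0" unfolding l_def using q by (metis abs_of_pos real_sqrt_mult_self)
  define v where "v = l *\<^sub>R w0"
  have Sv: "S c (c + v)" using L_dil[OF c _ S0, of l] lpos by (simp add: v_def)
  have vu: "eta v u = 0" using w0 by (simp add: v_def)
  have Ev: "eta v v = eta w' w'"
  proof -
    have "eta v v = (l * l) * eta w0 w0" by (simp add: v_def)
    also have "\<dots> = eta w' w'" using l2 E0 by simp
    finally show ?thesis .
  qed
  show ?thesis
  proof (cases "v = w'")
    case True then show ?thesis using Sv by simp
  next
    case False
    define n where "n = v - w'"
    have nu: "eta n u = 0" using vu w' by (simp add: n_def)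
    have "n \<noteq> 0" using False by (simp add: n_def)
    then have En: "eta n n < 0" using eta_orth_neg[OF tl nu] by blast
    have Enn: "eta n n = 2 * (eta v v - eta v w')" using Ev
      by (simp add: n_def eta_sym[of w' v] algebra_simps)
    have "eta v n = eta v v - eta v w'" by (simp add: n_def)
    then have "2 * eta v n / eta n n = 1" using Enn En by auto
    then have "refl n v = v - n" by (simp add: refl_def)
    then have rv: "refl n v = w'" by (simp add: n_def)
    have nu': "eta u n = 0" using nu eta_sym by metis
    have "S (c + refl n (c - c)) (c + refl n ((c + v) - c))"
      using L_refl[OF c _ _ Sv] En nu' by auto
    moreover have "refl n 0 = 0" by (simp add: refl_def)
    ultimately show ?thesis using rv by simp
  qed
qed

lemma Hyp:
  assumes c: "c \<in> X" and w0: "eta w0 u = 0" "w0 \<noteq> 0" and S0: "S c (c + w0)"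
    and rs: "eta (s - r) u = 0"
  shows "S r s"
proof -
  define b where "b = eta (r - c) u / eta u u"
  define c' where "c' = c + b *\<^sub>R u"
  have all: "S c' (c' + w)" if "eta w u = 0" for w
    using L_trans[OF Orth[OF c w0 S0 that], of b] by (simp add: c'_def algebra_simps)
  have wr: "eta (r - c') u = 0" using tl by (simp add: c'_def b_def)
  have "S c' r" using all[OF wr] by simp
  moreover have "eta (r - c' + (s - r)) u = 0" using wr rs by simp
  then have "S c' s" using all by fastforce
  ultimately show ?thesis using Ssym Strans by blast
qed

lemma Triv:
  assumes c: "c \<in> X" and t: "t \<noteq> 0" and St: "S c (c + t *\<^sub>R u)"
    and all: "\<And>w. eta w u = 0 \<Longrightarrow> S c (c + w)"
  shows "S x y"
proof -
  have Su: "S c (c + s *\<^sub>R u)" for s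
  proof (cases "s = 0")
    case True then show ?thesis using Srefl by simp
  next
    case False
    have "S (c + (s/t) *\<^sub>R (c - c)) (c + (s/t) *\<^sub>R ((c + t *\<^sub>R u) - c))"
      using L_dil[OF c _ St, of "s/t"] False t by simp
    then show ?thesis using t by simp
  qed
  have Sx: "S c z" for z
  proof -
    define b where "b = eta (z - c) u / eta u u"
    define w where "w = z - c - b *\<^sub>R u"
    have wu: "eta w u = 0" using tl by (simp add: w_def b_def)
    have "S (c + b *\<^sub>R u) (c + w + b *\<^sub>R u)" using L_trans[OF all[OF wu]] .
    moreover have "c + w + b *\<^sub>R u = z" by (simp add: w_def)
    ultimately have "S (c + b *\<^sub>R u) z" by simp
    then show ?thesis using Su Strans by blast
  qed
  show ?thesis using Sx Ssym Strans by blast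
qed

end


theorem theorem7:
  fixes a u :: point and X :: "point set" and S :: "point \<Rightarrow> point \<Rightarrow> bool"
  assumes timelike: "eta u u > 0"
    and X_def: "X = line a u"
    and equiv: "equivp S"
    and inv: "invariant_under (\<lambda>f. causal_aut f \<and> f ` X = X) S"
    and nontriv: "nontrivial_rel S"
    and link: "\<exists>p q. p \<in> X \<and> q \<notin> X \<and> S p q"
  shows "\<forall>r s. S r s \<longleftrightarrow> eta (s - r) u = 0"
proof -
  interpret ctx a u X S using timelike X_def equiv inv by unfold_locales auto
  have notall: "\<not> (\<forall>x y. S x y)" using nontriv by (simp add: nontrivial_rel_def)
  obtain p q where p: "p \<in> X" and q: "q \<notin> X" and Spq: "S p q" using link by blast
  define N where "N = eta u u"
  have N: "N > 0" using timelike by (simp add: N_def)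
  define al where "al = eta (q - p) u / N"
  define w where "w = q - p - al *\<^sub>R u"
  have wu: "eta w u = 0" using N by (simp add: w_def al_def N_def)
  have qpw: "q = p + al *\<^sub>R u + w" by (simp add: w_def)
  have wnz: "w \<noteq> 0"
  proof
    assume "w = 0"
    obtain t where "p = a + t *\<^sub>R u" using p memX by blast
    then have "q = a + (t + al) *\<^sub>R u" using qpw \<open>w = 0\<close> by (simp add: scaleR_add_left)
    then show False using q memX by blast
  qed
  have al0: "al = 0"
  proof (rule ccontr)
    assume alnz: "al \<noteq> 0"
    have "S (p + refl u (p - p)) (p + refl u (q - p))"
      using L_refl[OF p _ _ Spq, of u] N by (simp add: N_def)
    moreover have "refl u (q - p) = (q - p) - (2 * al) *\<^sub>R u"
      using N by (simp add: refl_def al_def N_def)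
    moreover have "refl u (p - p) = 0" by (simp add: refl_def)
    ultimately have "S p (q - (2 * al) *\<^sub>R u)" by simp
    from L_trans[OF this, of "2 * al"] have "S (p + (2 * al) *\<^sub>R u) q" by simp
    then have S2: "S p (p + (2 * al) *\<^sub>R u)" using Spq Ssym Strans by blast
    have "S (p + (1/2) *\<^sub>R (p - p)) (p + (1/2) *\<^sub>R ((p + (2 * al) *\<^sub>R u) - p))"
      using L_dil[OF p _ S2, of "1/2"] by simp
    then have Spc: "S p (p + al *\<^sub>R u)" by simp
    define c where "c = p + al *\<^sub>R u"
    have cX: "c \<in> X"
    proof -
      obtain t where "p = a + t *\<^sub>R u" using p memX by blast
      then have "c = a + (t + al) *\<^sub>R u" by (simp add: c_def scaleR_add_left)
      then show ?thesis using memX by blast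
    qed
    have Scw: "S c (c + w)" using Spc Spq qpw Ssym Strans c_def by metis
    have all: "\<And>w'. eta w' u = 0 \<Longrightarrow> S c (c + w')" using Orth[OF cX wu wnz Scw] by blast
    have "S c (c + (- al) *\<^sub>R u)" using Spc Ssym by (simp add: c_def)
    then have "\<forall>x y. S x y" using Triv[OF cX _ _ all] alnz by (metis neg_equal_0_iff_equal)
    then show False using notall by blast
  qed
  have Spw: "S p (p + w)" using Spq qpw al0 by simp
  show ?thesis
  proof (intro allI iffI)
    fix r s assume "eta (s - r) u = 0"
    then show "S r s" using Hyp[OF p wu wnz Spw] by blast
  next
    fix r s assume Srs: "S r s"
    show "eta (s - r) u = 0"
    proof (rule ccontr)
      assume e: "eta (s - r) u \<noteq> 0"
      define pr where "pr = p + (eta (r - p) u / N) *\<^sub>R u"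
      define ps where "ps = p + (eta (s - p) u / N) *\<^sub>R u"
      have prX: "pr \<in> X"
      proof -
        obtain t where "p = a + t *\<^sub>R u" using p memX by blast
        then have "pr = a + (t + eta (r - p) u / N) *\<^sub>R u" by (simp add: pr_def scaleR_add_left)
        then show ?thesis using memX by blast
      qed
      have "eta (r - pr) u = 0" using N by (simp add: pr_def N_def)
      then have S1: "S pr r" using Hyp[OF p wu wnz Spw] by blast
      have "eta (s - ps) u = 0" using N by (simp add: ps_def N_def)
      then have S2: "S ps s" using Hyp[OF p wu wnz Spw] by blast
      have S3: "S pr ps" using S1 S2 Srs Ssym Strans by blast
      have psr: "ps = pr + (eta (s - r) u / N) *\<^sub>R u"
        by (simp add: pr_def ps_def diff_divide_distrib scaleR_diff_left)
      have "eta ((pr + w) - pr) u = 0" using wu by simp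
      then have Sw: "S pr (pr + w)" using Hyp[OF p wu wnz Spw] by blast
      have all: "\<And>w'. eta w' u = 0 \<Longrightarrow> S pr (pr + w')" using Orth[OF prX wu wnz Sw] by blast
      have "eta (s - r) u / N \<noteq> 0" using e N by simp
      then have "\<forall>x y. S x y" using Triv[OF prX _ _ all] S3 psr by metis
      then show False using notall by blast
    qed
  qed
qed

end
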